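(* For every function $g_1:\mathbb{N}\to\mathbb{N}$ there exists a function $g_2:\mathbb{N}\to\mathbb{N}$ with $g_2\ge g_1$ such that the following holds. Let $H=(V,E)$ be a graph of cutwidth $\mathrm{cw}(H)$, let $F\subseteq V$ be a set of initially burned vertices with $|F|\le g_1(\mathrm{cw}(H))$, and let the budget be any $b\ge 1$. Then there is a protection strategy for the firefighter process on $H$ started from the burned set $F$ such that at most $g_2(\mathrm{cw}(H))$ vertices are burned at the end of the process.
   Context: Firefighter process with initial burned set $F$: at step $t=0$ all vertices of $F$ are burned. At every step $t>0$: (1) protection phase: at most $b$ vertices not yet burned become protected; (2) spreading phase: every unprotected vertex adjacent to a burned vertex becomes burned. Burned and protected vertices stay so; the process stops when no new vertex can become burned. The cutwidth $\mathrm{cw}(G)$ of a graph $G$ on $n$ vertices is the minimum $k$ such that there is an ordering $v_1,\dots,v_n$ of its vertices with at most $k$ edges between $\{v_1,\dots,v_i\}$ and $\{v_{i+1},\dots,v_n\}$ for every $i\in\{1,\dots,n-1\}$. *)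

theory Defs
  imports Main
begin

definition graph :: "nat set \<Rightarrow> nat set set \<Rightarrow> bool" where
  "graph V E \<longleftrightarrow> finite V \<and> (\<forall>e\<in>E. e \<subseteq> V \<and> card e = 2)"

definition cut_edges :: "nat set set \<Rightarrow> nat set \<Rightarrow> nat set \<Rightarrow> nat set set" where
  "cut_edges E A B = {e \<in> E. e \<inter> A \<noteq> {} \<and> e \<inter> B \<noteq> {}}"

definition cutwidth :: "nat set \<Rightarrow> nat set set \<Rightarrow> nat" where
  "cutwidth V E = (LEAST k. \<exists>xs. distinct xs \<and> set xs = V \<and>
     (\<forall>i\<in>{1..<length xs}. card (cut_edges E (set (take i xs)) (set (drop i xs))) \<le> k))"

fun ff_state :: "nat set set \<Rightarrow> nat set \<Rightarrow> (nat \<Rightarrow> nat set) \<Rightarrow> nat \<Rightarrow> nat set \<times> nat set" where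
  "ff_state E F S 0 = (F, {})"
| "ff_state E F S (Suc t) =
     (let B = fst (ff_state E F S t); P = snd (ff_state E F S t) \<union> S (Suc t)
      in (B \<union> {v. v \<notin> P \<and> (\<exists>u\<in>B. {u, v} \<in> E)}, P))"

definition valid_strategy :: "nat set \<Rightarrow> nat set set \<Rightarrow> nat set \<Rightarrow> nat \<Rightarrow> (nat \<Rightarrow> nat set) \<Rightarrow> bool" where
  "valid_strategy V E F b S \<longleftrightarrow>
     (\<forall>t>0. S t \<subseteq> V \<and> card (S t) \<le> b \<and> S t \<inter> fst (ff_state E F S (t - 1)) = {})"

definition final_burned :: "nat set set \<Rightarrow> nat set \<Rightarrow> (nat \<Rightarrow> nat set) \<Rightarrow> nat set" where
  "final_burned E F S = (\<Union>t. fst (ff_state E F S t))"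

end

theory Submission
  imports Defs
begin



definition crosses :: "(nat \<Rightarrow> nat) \<Rightarrow> nat set \<Rightarrow> nat \<Rightarrow> bool" where
  "crosses pos e i \<longleftrightarrow> (\<exists>x\<in>e. \<exists>y\<in>e. pos x < i \<and> i \<le> pos y)"

definition goodord :: "nat set \<Rightarrow> nat set set \<Rightarrow> (nat \<Rightarrow> nat) \<Rightarrow> nat \<Rightarrow> bool" where
  "goodord V E pos k \<longleftrightarrow> inj_on pos V \<and> (\<forall>i. card {e\<in>E. crosses pos e i} \<le> k)"

fun ball :: "nat set set \<Rightarrow> nat set \<Rightarrow> nat \<Rightarrow> nat set" where
  "ball E F 0 = F"
| "ball E F (Suc t) = ball E F t \<union> {v. \<exists>u\<in>ball E F t. {u,v} \<in> E}"

lemma graph_finE: "graph V E \<Longrightarrow> finite E"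
  unfolding graph_def by (meson PowI finite_Pow_iff finite_subset subsetI)

lemma graph_edge: "graph V E \<Longrightarrow> {u,v} \<in> E \<Longrightarrow> u \<in> V \<and> v \<in> V \<and> u \<noteq> v"
proof -
  assume g: "graph V E" and e: "{u,v} \<in> E"
  then have "{u,v} \<subseteq> V" "card {u,v} = 2" unfolding graph_def by auto
  then show ?thesis by (cases "u = v") auto
qed

lemma ball_mono: "s \<le> t \<Longrightarrow> ball E F s \<subseteq> ball E F t"
  by (induction t) (auto simp: le_Suc_eq)

lemma ball_sub: "graph V E \<Longrightarrow> F \<subseteq> V \<Longrightarrow> ball E F t \<subseteq> V"
  by (induction t) (auto dest: graph_edge)

lemma deg_bound:
  assumes g: "graph V E" and go: "goodord V E pos k" and u: "u \<in> V"
  shows "card {v. {u,v} \<in> E} \<le> 2*k"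
proof -
  have fE: "finite E" using g graph_finE by blast
  let ?L = "{v. {u,v} \<in> E \<and> pos v < pos u}"
  let ?R = "{v. {u,v} \<in> E \<and> pos u < pos v}"
  have inj: "inj_on (\<lambda>v. {u,v}) A" for A
    by (rule inj_onI) (auto simp: doubleton_eq_iff)
  have split: "{v. {u,v} \<in> E} \<subseteq> ?L \<union> ?R"
  proof
    fix v assume "v \<in> {v. {u,v} \<in> E}"
    then have "{u,v} \<in> E" by simp
    then have "v \<in> V" "u \<noteq> v" using graph_edge[OF g] by auto
    then have "pos u \<noteq> pos v" using go u unfolding goodord_def inj_on_def by blast
    then show "v \<in> ?L \<union> ?R" using \<open>{u,v} \<in> E\<close> by auto
  qed
  have "(\<lambda>v. {u,v}) ` ?L \<subseteq> {e\<in>E. crosses pos e (pos u)}"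
    unfolding crosses_def by auto
  then have "card ((\<lambda>v. {u,v}) ` ?L) \<le> card {e\<in>E. crosses pos e (pos u)}"
    by (rule card_mono[rotated]) (simp add: fE)
  also have "\<dots> \<le> k" using go unfolding goodord_def by blast
  finally have cL: "card ?L \<le> k" using card_image[OF inj, of ?L] by simp
  have "(\<lambda>v. {u,v}) ` ?R \<subseteq> {e\<in>E. crosses pos e (Suc (pos u))}"
    unfolding crosses_def by auto
  then have "card ((\<lambda>v. {u,v}) ` ?R) \<le> card {e\<in>E. crosses pos e (Suc (pos u))}"
    by (rule card_mono[rotated]) (simp add: fE)
  also have "\<dots> \<le> k" using go unfolding goodord_def by blast
  finally have cR: "card ?R \<le> k" using card_image[OF inj, of ?R] by simp
  have fV: "finite V" using g unfolding graph_def by blast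
  have "finite ?L" "finite ?R"
    by (rule finite_subset[OF _ fV], use graph_edge[OF g] in auto)+
  then have "card {v. {u,v} \<in> E} \<le> card (?L \<union> ?R)"
    using split by (intro card_mono) auto
  also have "\<dots> \<le> card ?L + card ?R" by (rule card_Un_le)
  finally have "card {v. {u,v} \<in> E} \<le> card ?L + card ?R" .
  then show ?thesis using cL cR by simp
qed

lemma ball_card:
  assumes g: "graph V E" and go: "goodord V E pos k" and F: "F \<subseteq> V"
  shows "card (ball E F t) \<le> card F * (2*k+1)^t"
proof (induction t)
  case 0 then show ?case by simp
next
  case (Suc t)
  let ?B = "ball E F t"
  have fB: "finite ?B" using ball_sub[OF g F] g unfolding graph_def by (meson finite_subset)
  have eq: "ball E F (Suc t) = ?B \<union> (\<Union>u\<in>?B. {v. {u,v} \<in> E})" by auto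
  have "card (\<Union>u\<in>?B. {v. {u,v} \<in> E}) \<le> (\<Sum>u\<in>?B. card {v. {u,v} \<in> E})"
    using card_UN_le[OF fB] .
  also have "\<dots> \<le> card ?B * (2*k)"
    using sum_bounded_above[of ?B "\<lambda>u. card {v. {u,v} \<in> E}" "2*k"] deg_bound[OF g go] ball_sub[OF g F]
    by auto
  finally have "card (\<Union>u\<in>?B. {v. {u,v} \<in> E}) \<le> card ?B * (2*k)" .
  moreover have "card (ball E F (Suc t)) \<le> card ?B + card (\<Union>u\<in>?B. {v. {u,v} \<in> E})"
    unfolding eq by (rule card_Un_le)
  ultimately have "card (ball E F (Suc t)) \<le> card ?B + card ?B * (2*k)" by linarith
  also have "\<dots> = card ?B * (2*k+1)" by simp
  also have "\<dots> \<le> card F * (2*k+1)^t * (2*k+1)" using Suc by (intro mult_right_mono) auto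
  finally show ?case by (simp add: algebra_simps)
qed




lemma card2_eq: "card e = 2 \<Longrightarrow> x \<in> e \<Longrightarrow> y \<in> e \<Longrightarrow> x \<noteq> y \<Longrightarrow> e = {x,y}"
  by (auto simp: card_2_iff)

definition btw :: "nat \<Rightarrow> nat \<Rightarrow> nat \<Rightarrow> bool" where
  "btw a p i \<longleftrightarrow> (a < i \<and> i \<le> p) \<or> (p < i \<and> i \<le> a)"

locale stp =
  fixes V :: "nat set" and E :: "nat set set" and pos :: "nat \<Rightarrow> nat" and k :: nat
    and F :: "nat set" and r :: nat
  assumes g: "graph V E" and go: "goodord V E pos (Suc k)" and FV: "F \<subseteq> V"
    and rbig: "4 * Suc k * card F \<le> r"
begin

definition "B = ball E F r"
definition "covered i \<longleftrightarrow> (\<exists>e\<in>E. e \<subseteq> B \<and> crosses pos e i)"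
definition "inW f x \<longleftrightarrow> (\<forall>i. btw (pos f) (pos x) i \<longrightarrow> covered i)"
definition "W = {x\<in>V. \<exists>f\<in>F. inW f x}"
definition "ff f i \<longleftrightarrow> (pos f < i \<and> (\<forall>j. pos f < j \<and> j < i \<longrightarrow> covered j))
    \<or> (i \<le> pos f \<and> (\<forall>j. i < j \<and> j \<le> pos f \<longrightarrow> covered j))"
definition "P = {w\<in>V. w \<notin> B \<and> (\<exists>f\<in>F. \<exists>e\<in>E. w \<in> e \<and> (\<exists>i. crosses pos e i \<and> \<not> covered i \<and> ff f i))}"
definition "V' = W - B - P"
definition "E' = {e\<in>E. e \<subseteq> V'}"
definition "F' = {v. v \<notin> P \<and> (\<exists>u\<in>B. {u,v} \<in> E)} - B"

lemma fV: "finite V" using g unfolding graph_def by blast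
lemma fE: "finite E" using g graph_finE by blast
lemma B_sub: "B \<subseteq> V" unfolding B_def using ball_sub[OF g FV] .
lemma PB: "P \<inter> B = {}" unfolding P_def by auto
lemma P_sub: "P \<subseteq> V" unfolding P_def by auto

lemma closure:
  assumes x: "inW f x" and e: "{x,y} \<in> E" and xP: "x \<notin> P" and yP: "y \<notin> P" and f: "f \<in> F"
  shows "inW f y"
proof (rule ccontr)
  assume "\<not> inW f y"
  then obtain i where i: "btw (pos f) (pos y) i" "\<not> covered i" by (auto simp: inW_def)
  have xV: "x \<in> V" and yV: "y \<in> V" using graph_edge[OF g e] by auto
  have key: False if c: "\<not> covered i0" and ffi: "ff f i0" and cr: "crosses pos {x,y} i0" for i0
  proof -
    have "x \<in> B"
    proof (rule ccontr)
      assume "x \<notin> B"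
      have ex: "\<exists>f\<in>F. \<exists>e\<in>E. x \<in> e \<and> (\<exists>i. crosses pos e i \<and> \<not> covered i \<and> ff f i)"
        by (intro bexI[OF _ f] bexI[OF _ e] conjI exI[of _ i0]) (auto simp: c ffi cr)
      then have "x \<in> P" unfolding P_def using xV \<open>x \<notin> B\<close> by blast
      then show False using xP by blast
    qed
    moreover have "y \<in> B"
    proof (rule ccontr)
      assume "y \<notin> B"
      have ex: "\<exists>f\<in>F. \<exists>e\<in>E. y \<in> e \<and> (\<exists>i. crosses pos e i \<and> \<not> covered i \<and> ff f i)"
        by (intro bexI[OF _ f] bexI[OF _ e] conjI exI[of _ i0]) (auto simp: c ffi cr)
      then have "y \<in> P" unfolding P_def using yV \<open>y \<notin> B\<close> by blast
      then show False using yP by blast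
    qed
    ultimately have "{x,y} \<subseteq> B" by blast
    then have "covered i0" unfolding covered_def using e cr by blast
    then show False using c by blast
  qed
  show False
  proof (cases "pos f < pos y")
    case True
    define Q where "Q = (\<lambda>i. pos f < i \<and> i \<le> pos y \<and> \<not> covered i)"
    define i0 where "i0 = Least Q"
    have ex: "Q i" using i True unfolding Q_def by (auto simp: btw_def)
    have "Q i0" unfolding i0_def by (rule LeastI[of Q, OF ex])
    then have i0: "pos f < i0 \<and> i0 \<le> pos y \<and> \<not> covered i0" unfolding Q_def by blast
    have cov: "covered j" if j1: "pos f < j" and j2: "j < i0" for j
    proof (rule ccontr)
      assume nc: "\<not> covered j"
      have "j \<le> pos y" using j2 i0 by linarith
      then have "Q j" unfolding Q_def using nc j1 by blast
      then have "i0 \<le> j" unfolding i0_def by (rule Least_le)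
      then show False using j2 by linarith
    qed
    have "pos x < i0"
    proof (rule ccontr)
      assume "\<not> pos x < i0"
      then have "btw (pos f) (pos x) i0" using i0 by (auto simp: btw_def)
      then show False using x i0 unfolding inW_def by blast
    qed
    then have "crosses pos {x,y} i0" using i0 unfolding crosses_def by blast
    moreover have "ff f i0" unfolding ff_def using i0 cov by blast
    ultimately show False using key i0 by blast
  next
    case False
    then have lt: "pos y < pos f" using i by (auto simp: btw_def)
    define Q where "Q = (\<lambda>i. pos y < i \<and> i \<le> pos f \<and> \<not> covered i)"
    define i0 where "i0 = Greatest Q"
    have ex: "Q i" using i lt unfolding Q_def by (auto simp: btw_def)
    have bnd: "\<And>y. Q y \<Longrightarrow> y \<le> pos f" unfolding Q_def by blast
    have "Q i0" unfolding i0_def using GreatestI_nat[of Q, OF ex bnd] .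
    then have i0: "pos y < i0 \<and> i0 \<le> pos f \<and> \<not> covered i0" unfolding Q_def by blast
    have cov: "covered j" if j1: "i0 < j" and j2: "j \<le> pos f" for j
    proof (rule ccontr)
      assume nc: "\<not> covered j"
      have "pos y < j" using j1 i0 by linarith
      then have "Q j" unfolding Q_def using nc j2 by blast
      then have "j \<le> i0" unfolding i0_def using Greatest_le_nat[of Q, OF _ bnd] by blast
      then show False using j1 by linarith
    qed
    have "i0 \<le> pos x"
    proof (rule ccontr)
      assume "\<not> i0 \<le> pos x"
      then have "btw (pos f) (pos x) i0" using i0 by (auto simp: btw_def)
      then show False using x i0 unfolding inW_def by blast
    qed
    then have "crosses pos {x,y} i0" using i0 unfolding crosses_def by blast
    moreover have "ff f i0" unfolding ff_def using i0 cov by blast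
    ultimately show False using key i0 by blast
  qed
qed

lemma closureW:
  assumes x: "x \<in> W" and e: "{x,y} \<in> E" and xP: "x \<notin> P" and yP: "y \<notin> P"
  shows "y \<in> W"
  using x closure[OF _ e xP yP] graph_edge[OF g e] unfolding W_def by blast

lemma ballW: "t \<le> r \<Longrightarrow> ball E F t \<subseteq> W"
proof (induction t)
  case 0
  have "inW f f" for f unfolding inW_def btw_def by auto
  then show ?case using FV unfolding W_def by auto
next
  case (Suc t)
  have "ball E F (Suc t) \<subseteq> B" unfolding B_def using ball_mono Suc by blast
  then have nP: "ball E F (Suc t) \<inter> P = {}" using PB by blast
  show ?case
  proof
    fix y assume y: "y \<in> ball E F (Suc t)"
    show "y \<in> W"
    proof (cases "y \<in> ball E F t")
      case True then show ?thesis using Suc by auto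
    next
      case False
      then obtain x where x: "x \<in> ball E F t" "{x,y} \<in> E" using y by auto
      have "x \<in> ball E F (Suc t)" using x by simp
      then show ?thesis using closureW[OF _ x(2)] Suc x y nP by auto
    qed
  qed
qed

lemma BW: "B \<subseteq> W" unfolding B_def using ballW by simp

lemma F'_sub: "F' \<subseteq> V'"
proof
  fix v assume v: "v \<in> F'"
  then obtain u where u: "u \<in> B" "{u,v} \<in> E" "v \<notin> P" "v \<notin> B" unfolding F'_def by auto
  have "v \<in> W" using closureW[OF _ u(2) _ u(3)] u(1) BW PB by blast
  then show "v \<in> V'" unfolding V'_def using u by auto
qed

lemma F'_card: "card F' \<le> card F * (2 * Suc k + 1) ^ Suc r"
proof -
  have "F' \<subseteq> ball E F (Suc r)" unfolding F'_def B_def by auto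
  then have "card F' \<le> card (ball E F (Suc r))"
    using ball_sub[OF g FV] fV by (meson card_mono finite_subset)
  also have "\<dots> \<le> card F * (2 * Suc k + 1) ^ Suc r" using ball_card[OF g go FV] .
  finally show ?thesis .
qed

lemma V'_sub: "V' \<subseteq> V" unfolding V'_def W_def by auto
lemma V'B: "V' \<inter> B = {}" unfolding V'_def by auto

lemma g': "graph V' E'"
  using g V'_sub fV finite_subset unfolding graph_def E'_def by auto

lemma go': "goodord V' E' pos k"
  unfolding goodord_def
proof
  show "inj_on pos V'" using go V'_sub inj_on_subset unfolding goodord_def by blast
  show "\<forall>i. card {e \<in> E'. crosses pos e i} \<le> k"
  proof
    fix i
    show "card {e \<in> E'. crosses pos e i} \<le> k"
    proof (cases "{e \<in> E'. crosses pos e i} = {}")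
      case True then show ?thesis by (metis card.empty zero_le)
    next
      case False
      then obtain e0 where e0: "e0 \<in> E'" "crosses pos e0 i" by blast
      then obtain x y where xy: "x \<in> e0" "y \<in> e0" "pos x < i" "i \<le> pos y"
        unfolding crosses_def by blast
      have e0E: "e0 \<in> E" "e0 \<subseteq> V'" using e0 unfolding E'_def by auto
      have "x \<noteq> y" using xy by auto
      have c2: "card e0 = 2" using g e0E(1) unfolding graph_def by blast
      have e0xy: "e0 = {x,y}" by (rule card2_eq[OF c2 xy(1,2) \<open>x \<noteq> y\<close>])
      have xW: "x \<in> W" and xP: "x \<notin> P" and yP: "y \<notin> P"
        using e0E xy unfolding V'_def by auto
      then obtain f where f: "f \<in> F" "inW f x" unfolding W_def by blast
      have fy: "inW f y" using closure[OF f(2) _ xP yP f(1)] e0E e0xy by simp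
      have "covered i"
      proof (cases "pos f < i")
        case True
        then have "btw (pos f) (pos y) i" using xy by (auto simp: btw_def)
        then show ?thesis using fy unfolding inW_def by blast
      next
        case False
        then have "btw (pos f) (pos x) i" using xy by (auto simp: btw_def)
        then show ?thesis using f unfolding inW_def by blast
      qed
      then obtain e1 where e1: "e1 \<in> E" "e1 \<subseteq> B" "crosses pos e1 i"
        unfolding covered_def by blast
      have "e1 \<noteq> {}" using e1(3) unfolding crosses_def by blast
      then have "e1 \<notin> E'" using e1(2) V'B unfolding E'_def by blast
      then have "{e \<in> E'. crosses pos e i} \<subseteq> {e \<in> E. crosses pos e i} - {e1}"
        unfolding E'_def by auto
      then have "card {e \<in> E'. crosses pos e i} \<le> card ({e \<in> E. crosses pos e i} - {e1})"
        using fE by (intro card_mono) auto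
      also have "\<dots> = card {e \<in> E. crosses pos e i} - 1"
        using e1 by (intro card_Diff_singleton) auto
      also have "\<dots> \<le> k" using go unfolding goodord_def by (metis diff_le_mono diff_Suc_1)
      finally show ?thesis .
    qed
  qed
qed

definition "iR f = (LEAST i. pos f < i \<and> \<not> covered i)"
definition "iL f = (GREATEST i. i \<le> pos f \<and> \<not> covered i)"

lemma P_card: "card P \<le> r"
proof -
  define Ecr where "Ecr = (\<Union>f\<in>F. {e\<in>E. crosses pos e (iR f)} \<union> {e\<in>E. crosses pos e (iL f)})"
  have PU: "P \<subseteq> \<Union>Ecr"
  proof
    fix w assume "w \<in> P"
    then obtain f e i where w: "f \<in> F" "e \<in> E" "w \<in> e" "crosses pos e i" "\<not> covered i" "ff f i"
      unfolding P_def by blast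
    have "i = iR f \<or> i = iL f"
    proof (cases "pos f < i")
      case True
      then have "iR f = i" unfolding iR_def
      proof (intro Least_equality)
        fix y assume y: "pos f < y \<and> \<not> covered y"
        show "i \<le> y"
        proof (rule ccontr)
          assume "\<not> i \<le> y"
          then show False using w(6) y True unfolding ff_def by auto
        qed
      qed (use True w in auto)
      then show ?thesis by simp
    next
      case False
      then have "iL f = i" unfolding iL_def
      proof (intro Greatest_equality)
        fix y assume y: "y \<le> pos f \<and> \<not> covered y"
        show "y \<le> i"
        proof (rule ccontr)
          assume "\<not> y \<le> i"
          then show False using w(6) y False unfolding ff_def by auto
        qed
      qed (use False w in auto)
      then show ?thesis by simp
    qed
    then have "e \<in> Ecr" unfolding Ecr_def using w by auto
    then show "w \<in> \<Union>Ecr" using w by blast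
  qed
  have fF: "finite F" using FV fV finite_subset by blast
  have "card Ecr \<le> (\<Sum>f\<in>F. card ({e\<in>E. crosses pos e (iR f)} \<union> {e\<in>E. crosses pos e (iL f)}))"
    unfolding Ecr_def by (rule card_UN_le[OF fF])
  also have "\<dots> \<le> card F * (2 * Suc k)"
  proof -
    have "card ({e\<in>E. crosses pos e (iR f)} \<union> {e\<in>E. crosses pos e (iL f)}) \<le> 2 * Suc k" for f
    proof -
    have "card ({e\<in>E. crosses pos e (iR f)} \<union> {e\<in>E. crosses pos e (iL f)})
        \<le> card {e\<in>E. crosses pos e (iR f)} + card {e\<in>E. crosses pos e (iL f)}" by (rule card_Un_le)
    also have "\<dots> \<le> Suc k + Suc k" using go unfolding goodord_def by (meson add_le_mono)
    finally show ?thesis by simp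
    qed
    then show ?thesis using sum_bounded_above[of F "\<lambda>f. card ({e\<in>E. crosses pos e (iR f)} \<union> {e\<in>E. crosses pos e (iL f)})" "2 * Suc k"] by simp
  qed
  finally have cE: "card Ecr \<le> card F * (2 * Suc k)" .
  have EcrE: "Ecr \<subseteq> E" unfolding Ecr_def by auto
  have "card (\<Union>Ecr) \<le> sum card Ecr" by (rule card_Union_le_sum_card)
  also have "\<dots> = sum (\<lambda>_. 2) Ecr"
    using EcrE g unfolding graph_def by (intro sum.cong) auto
  also have "\<dots> = 2 * card Ecr" by simp
  finally have "card (\<Union>Ecr) \<le> 2 * card Ecr" .
  moreover have "finite (\<Union>Ecr)" using EcrE g fV unfolding graph_def
    by (meson Sup_le_iff finite_subset subsetD)
  ultimately have "card P \<le> 2 * card Ecr" using PU card_mono by (meson le_trans)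
  also have "\<dots> \<le> 2 * (card F * (2 * Suc k))" using cE by simp
  also have "\<dots> = 4 * Suc k * card F" by (simp add: algebra_simps)
  finally show ?thesis using rbig by simp
qed

end



lemma ff_snd_Suc: "snd (ff_state E F S (Suc t)) = snd (ff_state E F S t) \<union> S (Suc t)"
  by (simp add: Let_def)

lemma ff_fst_Suc: "fst (ff_state E F S (Suc t)) = fst (ff_state E F S t) \<union>
   {v. v \<notin> snd (ff_state E F S (Suc t)) \<and> (\<exists>u\<in>fst (ff_state E F S t). {u,v} \<in> E)}"
  by (simp add: Let_def)

declare ff_state.simps(2)[simp del]

lemma ff_fst_mono: "s \<le> t \<Longrightarrow> fst (ff_state E F S s) \<subseteq> fst (ff_state E F S t)"
proof (induction t)
  case 0 then show ?case by simp
next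
  case (Suc t) then show ?case using ff_fst_Suc[of E F S t] by (auto simp: le_Suc_eq)
qed

lemma ff_snd_ge: "0 < s \<Longrightarrow> s \<le> t \<Longrightarrow> S s \<subseteq> snd (ff_state E F S t)"
proof (induction t)
  case 0 then show ?case by simp
next
  case (Suc t) then show ?case using ff_snd_Suc[of E F S t] by (auto simp: le_Suc_eq)
qed

lemma ff_sub: "graph V E \<Longrightarrow> F \<subseteq> V \<Longrightarrow> fst (ff_state E F S t) \<subseteq> V"
proof (induction t)
  case 0 then show ?case by simp
next
  case (Suc t) then show ?case using ff_fst_Suc[of E F S t] by (auto dest: graph_edge)
qed

context stp begin

definition "ps = sorted_list_of_set P"
definition "S1 t = (if 1 \<le> t \<and> t \<le> length ps then {ps ! (t-1)} else {})"
definition "comb S' t = (if t \<le> Suc r then S1 t else S' (t - Suc r))"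

lemma fP: "finite P" using P_sub fV finite_subset by blast
lemma ps_set: "set ps = P"
  using fP unfolding ps_def by simp
lemma ps_len: "length ps \<le> r"
  using P_card fP unfolding ps_def by simp

lemma S1_sub: "S1 t \<subseteq> P"
proof -
  have "ps ! (t - 1) \<in> P" if "t - 1 < length ps" using nth_mem[OF that] ps_set by simp
  then show ?thesis unfolding S1_def by auto
qed

lemma S1_card: "card (S1 t) \<le> 1" unfolding S1_def by auto

lemma snd_le: "t \<le> Suc r \<Longrightarrow> snd (ff_state E F (comb S') t) \<subseteq> P"
proof (induction t)
  case 0 then show ?case by simp
next
  case (Suc t)
  then show ?case using ff_snd_Suc[of E F "comb S'" t] S1_sub[of "Suc t"] unfolding comb_def by auto
qed

lemma fst_le: "t \<le> r \<Longrightarrow> fst (ff_state E F (comb S') t) = ball E F t"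
proof (induction t)
  case 0 then show ?case by simp
next
  case (Suc t)
  have sP: "snd (ff_state E F (comb S') (Suc t)) \<subseteq> P" by (rule snd_le) (use Suc in linarith)
  have "ball E F (Suc t) \<subseteq> B" unfolding B_def using ball_mono Suc by blast
  then have nP: "ball E F (Suc t) \<inter> P = {}" using PB by blast
  have IH: "fst (ff_state E F (comb S') t) = ball E F t" using Suc by simp
  show ?case
  proof
    show "fst (ff_state E F (comb S') (Suc t)) \<subseteq> ball E F (Suc t)"
      unfolding ff_fst_Suc IH by auto
    show "ball E F (Suc t) \<subseteq> fst (ff_state E F (comb S') (Suc t))"
    proof
      fix v assume v: "v \<in> ball E F (Suc t)"
      then have "v \<notin> snd (ff_state E F (comb S') (Suc t))" using nP sP by blast
      then show "v \<in> fst (ff_state E F (comb S') (Suc t))"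
        using v unfolding ff_fst_Suc IH by auto
    qed
  qed
qed

lemma snd_r: "snd (ff_state E F (comb S') (Suc r)) = P"
proof
  show "snd (ff_state E F (comb S') (Suc r)) \<subseteq> P" by (rule snd_le) simp
  show "P \<subseteq> snd (ff_state E F (comb S') (Suc r))"
  proof
    fix p assume "p \<in> P"
    then obtain j where j: "j < length ps" "p = ps ! j" using ps_set by (metis in_set_conv_nth)
    have "comb S' (Suc j) = {p}" unfolding comb_def S1_def using j ps_len by auto
    moreover have "comb S' (Suc j) \<subseteq> snd (ff_state E F (comb S') (Suc r))"
      using j ps_len by (intro ff_snd_ge) auto
    ultimately show "p \<in> snd (ff_state E F (comb S') (Suc r))" by blast
  qed
qed

lemma fst_r1: "fst (ff_state E F (comb S') (Suc r)) = B \<union> F'"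
  unfolding ff_fst_Suc snd_r fst_le[OF order_refl] B_def[symmetric] F'_def by auto

lemma sim:
  assumes S'V: "\<forall>t>0. S' t \<subseteq> V'"
  shows "fst (ff_state E F (comb S') (Suc r + t)) = B \<union> fst (ff_state E' F' S' t) \<and>
         snd (ff_state E F (comb S') (Suc r + t)) = P \<union> snd (ff_state E' F' S' t)"
proof (induction t)
  case 0 then show ?case using fst_r1 snd_r by simp
next
  case (Suc t)
  let ?X = "fst (ff_state E' F' S' t)"
  have XV: "?X \<subseteq> V'" using ff_sub[OF g' F'_sub] .
  have FX: "F' \<subseteq> ?X" using ff_fst_mono[of 0 t E' F' S'] by simp
  have c: "comb S' (Suc (Suc r + t)) = S' (Suc t)" unfolding comb_def by simp
  have snd_eq: "snd (ff_state E F (comb S') (Suc (Suc r + t))) = P \<union> snd (ff_state E' F' S' (Suc t))"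
    using Suc ff_snd_Suc[of E F "comb S'" "Suc r + t"] ff_snd_Suc[of E' F' S' t] c by auto
  have fst_eq: "fst (ff_state E F (comb S') (Suc (Suc r + t))) = B \<union> fst (ff_state E' F' S' (Suc t))"
  proof -
    have L: "fst (ff_state E F (comb S') (Suc (Suc r + t))) = (B \<union> ?X) \<union>
       {v. v \<notin> P \<union> snd (ff_state E' F' S' (Suc t)) \<and> (\<exists>u\<in>B \<union> ?X. {u,v} \<in> E)}"
      using ff_fst_Suc[of E F "comb S'" "Suc r + t"] snd_eq Suc by simp
    have R: "B \<union> fst (ff_state E' F' S' (Suc t)) = B \<union> (?X \<union>
       {v. v \<notin> snd (ff_state E' F' S' (Suc t)) \<and> (\<exists>u\<in>?X. {u,v} \<in> E')})"
      using ff_fst_Suc[of E' F' S' t] by simp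
    have "{v. v \<notin> P \<union> snd (ff_state E' F' S' (Suc t)) \<and> (\<exists>u\<in>B \<union> ?X. {u,v} \<in> E)}
        \<subseteq> B \<union> ?X \<union> {v. v \<notin> snd (ff_state E' F' S' (Suc t)) \<and> (\<exists>u\<in>?X. {u,v} \<in> E')}"
    proof
      fix v assume "v \<in> {v. v \<notin> P \<union> snd (ff_state E' F' S' (Suc t)) \<and> (\<exists>u\<in>B \<union> ?X. {u,v} \<in> E)}"
      then obtain u where v: "v \<notin> P" "v \<notin> snd (ff_state E' F' S' (Suc t))" "u \<in> B \<union> ?X" "{u,v} \<in> E"
        by blast
      show "v \<in> B \<union> ?X \<union> {v. v \<notin> snd (ff_state E' F' S' (Suc t)) \<and> (\<exists>u\<in>?X. {u,v} \<in> E')}"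
      proof (cases "v \<in> B \<union> ?X")
        case True then show ?thesis by blast
      next
        case False
        show ?thesis
        proof (cases "u \<in> B")
          case True
          then have "v \<in> F'" unfolding F'_def using v False by blast
          then show ?thesis using FX by blast
        next
          case uB: False
          then have uX: "u \<in> ?X" using v by blast
          then have uV': "u \<in> V'" using XV by blast
          then have "u \<in> W" "u \<notin> P" unfolding V'_def by auto
          then have "v \<in> W" using closureW v by blast
          then have "v \<in> V'" unfolding V'_def using v False by blast
          then have "{u,v} \<in> E'" unfolding E'_def using uV' v by auto
          then show ?thesis using uX v by blast
        qed
      qed
    qed
    moreover have "{v. v \<notin> snd (ff_state E' F' S' (Suc t)) \<and> (\<exists>u\<in>?X. {u,v} \<in> E')} \<subseteq>
        {v. v \<notin> P \<union> snd (ff_state E' F' S' (Suc t)) \<and> (\<exists>u\<in>B \<union> ?X. {u,v} \<in> E)}"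
    proof
      fix v assume "v \<in> {v. v \<notin> snd (ff_state E' F' S' (Suc t)) \<and> (\<exists>u\<in>?X. {u,v} \<in> E')}"
      then obtain u where v: "v \<notin> snd (ff_state E' F' S' (Suc t))" "u \<in> ?X" "{u,v} \<in> E'" by blast
      then have "v \<in> V'" "{u,v} \<in> E" unfolding E'_def by auto
      then have "v \<notin> P" unfolding V'_def by blast
      then show "v \<in> {v. v \<notin> P \<union> snd (ff_state E' F' S' (Suc t)) \<and> (\<exists>u\<in>B \<union> ?X. {u,v} \<in> E)}"
        using v \<open>{u,v} \<in> E\<close> by blast
    qed
    ultimately show ?thesis unfolding L R by blast
  qed
  show ?case using snd_eq fst_eq by simp
qed

lemma valid:
  assumes S': "\<forall>t>0. S' t \<subseteq> V' \<and> card (S' t) \<le> 1 \<and> S' t \<inter> fst (ff_state E' F' S' (t - 1)) = {}"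
  shows "\<forall>t>0. comb S' t \<subseteq> V \<and> card (comb S' t) \<le> 1 \<and> comb S' t \<inter> fst (ff_state E F (comb S') (t - 1)) = {}"
proof (intro allI impI)
  fix t :: nat assume t: "0 < t"
  show "comb S' t \<subseteq> V \<and> card (comb S' t) \<le> 1 \<and> comb S' t \<inter> fst (ff_state E F (comb S') (t - 1)) = {}"
  proof (cases "t \<le> Suc r")
    case True
    then have c: "comb S' t = S1 t" unfolding comb_def by simp
    have "fst (ff_state E F (comb S') (t - 1)) = ball E F (t - 1)" using True by (intro fst_le) simp
    also have "\<dots> \<subseteq> B" unfolding B_def using True by (intro ball_mono) simp
    finally show ?thesis unfolding c using S1_sub[of t] S1_card[of t] P_sub PB by blast
  next
    case False
    define s where "s = t - Suc r"
    have ts: "t = Suc r + s" "0 < s" using False unfolding s_def by auto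
    have c: "comb S' t = S' s" unfolding comb_def s_def using False by simp
    have "t - 1 = Suc r + (s - 1)" using ts by simp
    then have "fst (ff_state E F (comb S') (t - 1)) = B \<union> fst (ff_state E' F' S' (s - 1))"
      using sim[of S' "s - 1"] S' by simp
    then show ?thesis unfolding c using S' ts V'_sub V'B by blast
  qed
qed

lemma final:
  assumes S'V: "\<forall>t>0. S' t \<subseteq> V'"
  shows "card (final_burned E F (comb S')) \<le> card B + card (final_burned E' F' S')"
proof -
  have sub: "final_burned E F (comb S') \<subseteq> B \<union> final_burned E' F' S'"
  proof
    fix v assume "v \<in> final_burned E F (comb S')"
    then obtain t where t: "v \<in> fst (ff_state E F (comb S') t)" unfolding final_burned_def by blast
    show "v \<in> B \<union> final_burned E' F' S'"
    proof (cases "t \<le> r")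
      case True
      then have "v \<in> ball E F t" using fst_le t by simp
      moreover have "ball E F t \<subseteq> ball E F r" by (rule ball_mono[OF True])
      ultimately show ?thesis unfolding B_def by blast
    next
      case False
      then have "t = Suc r + (t - Suc r)" by simp
      then have "v \<in> B \<union> fst (ff_state E' F' S' (t - Suc r))" using sim[OF S'V, of "t - Suc r"] t by simp
      then show ?thesis unfolding final_burned_def by blast
    qed
  qed
  have "final_burned E' F' S' \<subseteq> V" unfolding final_burned_def
    using ff_sub[OF g' F'_sub] V'_sub by blast
  then have "finite (B \<union> final_burned E' F' S')" using B_sub fV finite_subset by blast
  then have "card (final_burned E F (comb S')) \<le> card (B \<union> final_burned E' F' S')"
    by (rule card_mono[OF _ sub])
  also have "\<dots> \<le> card B + card (final_burned E' F' S')" by (rule card_Un_le)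
  finally show ?thesis .
qed

end



lemma no_edges:
  assumes g: "graph V E" and go: "goodord V E pos 0"
  shows "E = {}"
proof (rule ccontr)
  assume "E \<noteq> {}"
  then obtain e where e: "e \<in> E" by blast
  then have "card e = 2" "e \<subseteq> V" using g unfolding graph_def by auto
  then obtain x y where xy: "e = {x,y}" "x \<noteq> y" by (auto simp: card_2_iff)
  then have "pos x \<noteq> pos y" using go \<open>e \<subseteq> V\<close> unfolding goodord_def inj_on_def by blast
  then have "crosses pos e (max (pos x) (pos y))" unfolding crosses_def xy(1)
    by (cases "pos x < pos y") auto
  then have "e \<in> {e\<in>E. crosses pos e (max (pos x) (pos y))}" using e by blast
  moreover have "finite {e\<in>E. crosses pos e (max (pos x) (pos y))}" using graph_finE[OF g] by simp
  ultimately have "card {e\<in>E. crosses pos e (max (pos x) (pos y))} > 0"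
    using card_gt_0_iff by blast
  then show False using go unfolding goodord_def by (metis le_zero_eq not_less0)
qed

lemma ff_noedge: "fst (ff_state {} F S t) = F"
  by (induction t) (simp_all add: ff_fst_Suc)

definition "validS V E F S \<longleftrightarrow> (\<forall>t>0. S t \<subseteq> V \<and> card (S t) \<le> 1 \<and> S t \<inter> fst (ff_state E F S (t - 1)) = {})"

lemma core: "\<exists>N. \<forall>V E F pos. graph V E \<longrightarrow> goodord V E pos k \<longrightarrow> F \<subseteq> V \<longrightarrow> card F \<le> m \<longrightarrow>
  (\<exists>S. validS V E F S \<and> card (final_burned E F S) \<le> N)"
proof (induction k arbitrary: m)
  case 0
  show ?case
  proof (intro exI[of _ m] allI impI)
    fix V E F pos assume a: "graph V E" "goodord V E pos 0" "F \<subseteq> V" "card F \<le> m"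
    have E: "E = {}" by (rule no_edges[OF a(1) a(2)])
    have "final_burned E F (\<lambda>_. {}) = F" unfolding final_burned_def E ff_noedge by simp
    moreover have "validS V E F (\<lambda>_. {})" unfolding validS_def by simp
    ultimately show "\<exists>S. validS V E F S \<and> card (final_burned E F S) \<le> m" using a by auto
  qed
next
  case (Suc k)
  define r where "r = 4 * Suc k * m"
  define M where "M = m * (2 * Suc k + 1) ^ Suc r"
  obtain N' where N': "\<forall>V E F pos. graph V E \<longrightarrow> goodord V E pos k \<longrightarrow> F \<subseteq> V \<longrightarrow> card F \<le> M \<longrightarrow>
    (\<exists>S. validS V E F S \<and> card (final_burned E F S) \<le> N')" using Suc.IH[of M] by blast
  show ?case
  proof (intro exI[of _ "m * (2 * Suc k + 1) ^ r + N'"] allI impI)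
    fix V E F pos assume a: "graph V E" "goodord V E pos (Suc k)" "F \<subseteq> V" "card F \<le> m"
    interpret st: stp V E pos k F r
      by unfold_locales (use a in \<open>auto simp: r_def\<close>)
    have "card st.F' \<le> M"
    proof -
      have "card st.F' \<le> card F * (2 * Suc k + 1) ^ Suc r" by (rule st.F'_card)
      also have "\<dots> \<le> M" unfolding M_def using a(4) by (intro mult_right_mono) auto
      finally show ?thesis .
    qed
    then obtain S' where S': "validS st.V' st.E' st.F' S'" "card (final_burned st.E' st.F' S') \<le> N'"
      using N' st.g' st.go' st.F'_sub by blast
    have vS': "\<forall>t>0. S' t \<subseteq> st.V'" using S'(1) unfolding validS_def by blast
    have "validS V E F (st.comb S')" using st.valid S'(1) unfolding validS_def by blast
    moreover have "card (final_burned E F (st.comb S')) \<le> m * (2 * Suc k + 1) ^ r + N'"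
    proof -
      have "card (final_burned E F (st.comb S')) \<le> card st.B + card (final_burned st.E' st.F' S')"
        by (rule st.final[OF vS'])
      also have "card st.B \<le> card F * (2 * Suc k + 1) ^ r"
        unfolding st.B_def by (rule ball_card[OF a(1) a(2) a(3)])
      also have "card F * (2 * Suc k + 1) ^ r \<le> m * (2 * Suc k + 1) ^ r"
        using a(4) by (intro mult_right_mono) auto
      finally show ?thesis using S'(2) by linarith
    qed
    ultimately show "\<exists>S. validS V E F S \<and> card (final_burned E F S) \<le> m * (2 * Suc k + 1) ^ r + N'"
      by blast
  qed
qed

lemma cw_goodord:
  assumes g: "graph V E"
  shows "\<exists>pos. goodord V E pos (cutwidth V E)"
proof -
  define Q where "Q = (\<lambda>k. \<exists>xs. distinct xs \<and> set xs = V \<and>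
     (\<forall>i\<in>{1..<length xs}. card (cut_edges E (set (take i xs)) (set (drop i xs))) \<le> k))"
  have fV: "finite V" using g unfolding graph_def by blast
  have fE: "finite E" using graph_finE[OF g] .
  have "Q (card E)" unfolding Q_def
  proof (intro exI conjI)
    show "distinct (sorted_list_of_set V)" "set (sorted_list_of_set V) = V" using fV by auto
    show "\<forall>i\<in>{1..<length (sorted_list_of_set V)}. card (cut_edges E (set (take i (sorted_list_of_set V)))
          (set (drop i (sorted_list_of_set V)))) \<le> card E"
      using fE unfolding cut_edges_def by (auto intro: card_mono)
  qed
  then have "Q (cutwidth V E)" unfolding cutwidth_def Q_def[symmetric] by (rule LeastI)
  then obtain xs where xs: "distinct xs" "set xs = V"
    "\<forall>i\<in>{1..<length xs}. card (cut_edges E (set (take i xs)) (set (drop i xs))) \<le> cutwidth V E"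
    unfolding Q_def by blast
  define pos where "pos = (\<lambda>v. LEAST i. i < length xs \<and> xs ! i = v)"
  have pos: "pos v < length xs \<and> xs ! pos v = v" if "v \<in> V" for v
  proof -
    have "v \<in> set xs" using that xs(2) by simp
    then obtain j where "j < length xs" "xs ! j = v" by (auto simp: in_set_conv_nth)
    then show ?thesis unfolding pos_def by (intro LeastI[of "\<lambda>i. i < length xs \<and> xs ! i = v"]) auto
  qed
  have inj: "inj_on pos V" by (rule inj_onI) (metis pos)
  have "card {e\<in>E. crosses pos e i} \<le> cutwidth V E" for i
  proof (cases "1 \<le> i \<and> i < length xs")
    case True
    have "{e\<in>E. crosses pos e i} \<subseteq> cut_edges E (set (take i xs)) (set (drop i xs))"
    proof
      fix e assume "e \<in> {e\<in>E. crosses pos e i}"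
      then obtain x y where e: "e \<in> E" "x \<in> e" "y \<in> e" "pos x < i" "i \<le> pos y"
        unfolding crosses_def by blast
      have "x \<in> V" "y \<in> V" using e g unfolding graph_def by auto
      then have px: "pos x < length xs" "xs ! pos x = x" and py: "pos y < length xs" "xs ! pos y = y"
        using pos by auto
      have "x \<in> set (take i xs)" using px e(4) by (metis in_set_conv_nth length_take min_less_iff_conj nth_take)
      moreover have "y \<in> set (drop i xs)"
      proof -
        have "drop i xs ! (pos y - i) = y" using py e(5) by simp
        moreover have "pos y - i < length (drop i xs)" using py e(5) by simp
        ultimately show ?thesis by (metis nth_mem)
      qed
      ultimately show "e \<in> cut_edges E (set (take i xs)) (set (drop i xs))"
        unfolding cut_edges_def using e by blast
    qed
    then have "card {e\<in>E. crosses pos e i} \<le> card (cut_edges E (set (take i xs)) (set (drop i xs)))"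
      using fE unfolding cut_edges_def by (intro card_mono) auto
    also have "\<dots> \<le> cutwidth V E" using xs(3) True by auto
    finally show ?thesis .
  next
    case False
    have "{e\<in>E. crosses pos e i} = {}"
    proof (rule ccontr)
      assume "{e\<in>E. crosses pos e i} \<noteq> {}"
      then obtain e x y where e: "e \<in> E" "x \<in> e" "y \<in> e" "pos x < i" "i \<le> pos y"
        unfolding crosses_def by blast
      have "y \<in> V" using e g unfolding graph_def by auto
      then have "pos y < length xs" using pos by auto
      then show False using False e by auto
    qed
    then show ?thesis by (metis card.empty zero_le)
  qed
  then show ?thesis using inj unfolding goodord_def by blast
qed

theorem mainTheorem5:
  fixes g1 :: "nat \<Rightarrow> nat"
  shows "\<exists>g2 :: nat \<Rightarrow> nat. (\<forall>n. g1 n \<le> g2 n) \<and>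
    (\<forall>V E F (b::nat). graph V E \<longrightarrow> F \<subseteq> V \<longrightarrow> card F \<le> g1 (cutwidth V E) \<longrightarrow> 1 \<le> b \<longrightarrow>
       (\<exists>S. valid_strategy V E F b S \<and> card (final_burned E F S) \<le> g2 (cutwidth V E)))"
proof -
  have "\<forall>k. \<exists>N. \<forall>V E F pos. graph V E \<longrightarrow> goodord V E pos k \<longrightarrow> F \<subseteq> V \<longrightarrow> card F \<le> g1 k \<longrightarrow>
    (\<exists>S. validS V E F S \<and> card (final_burned E F S) \<le> N)" using core by blast
  then obtain NN where NN: "\<And>k. \<forall>V E F pos. graph V E \<longrightarrow> goodord V E pos k \<longrightarrow> F \<subseteq> V \<longrightarrow> card F \<le> g1 k \<longrightarrow>
    (\<exists>S. validS V E F S \<and> card (final_burned E F S) \<le> NN k)" by metis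
  show ?thesis
  proof (intro exI[of _ "\<lambda>n. max (g1 n) (NN n)"] conjI allI impI)
    fix n show "g1 n \<le> max (g1 n) (NN n)" by simp
  next
    fix V E F and b :: nat
    assume a: "graph V E" "F \<subseteq> V" "card F \<le> g1 (cutwidth V E)" "1 \<le> b"
    obtain pos where "goodord V E pos (cutwidth V E)" using cw_goodord[OF a(1)] by blast
    then obtain S where S: "validS V E F S" "card (final_burned E F S) \<le> NN (cutwidth V E)"
      using NN a by blast
    have "valid_strategy V E F b S" using S(1) a(4) unfolding validS_def valid_strategy_def
      by (meson le_trans)
    then show "\<exists>S. valid_strategy V E F b S \<and> card (final_burned E F S) \<le> max (g1 (cutwidth V E)) (NN (cutwidth V E))"
      using S(2) by (meson le_trans max.cobounded2)
  qed
qed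


end
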